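(* Let $G=(V,E)$ be a graph with $V=\{1,\ldots,n\}$, let $\mathbf{w}\colon E\to\{1,\ldots,N\}$, and let $w,\ell\in\mathbb{N}$ with $\ell$ even and $\ell\le n$. Define $$\mathcal{M}_{w,\ell}=\{(M_1,M_2)\mid M_1,M_2 \text{ are consistent matchings in } G,\ |M_1|=|M_2|=\ell/2,\ \mathbf{w}(M_1\cup M_2)=w\},$$ $$U_{w,\ell}=\Big\{(E_1,E_2,L)\ \Big|\ E_1,E_2\in\tbinom{E}{\ell/2},\ E_1\cap E_2=\emptyset,\ \mathbf{w}(E_1\cup E_2)=w,\ L\in\tbinom{V}{n-\ell}\Big\},$$ and for $i\in[2n]$ let $A_{w,\ell,i}=\{(E_1,E_2,L)\in U_{w,\ell}\mid i\in V(E_1)\cup L\}$ if $i\in[n]$, and $A_{w,\ell,i}=\{(E_1,E_2,L)\in U_{w,\ell}\mid i-n\in V(E_2)\cup L\}$ if $i\in[n+1,2n]$. Then $$\Big|\bigcap_{i\in[2n]}A_{w,\ell,i}\Big|=|\mathcal{M}_{w,\ell}|.$$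
   Context: Two matchings $M_1,M_2$ of a graph are consistent if $M_1\cap M_2=\emptyset$ and $V(M_1)=V(M_2)$, where $V(M)$ denotes the set of endpoints of edges of $M$. For a set $F$ of edges, $\mathbf{w}(F)=\sum_{e\in F}\mathbf{w}(e)$. $\binom{S}{k}$ is the family of $k$-element subsets of $S$; $[n]=\{1,\ldots,n\}$ and $[a,b]=\{a,\ldots,b\}$. *)

theory Defs
  imports Main
begin

definition simple_graph :: "nat \<Rightarrow> nat set set \<Rightarrow> bool" where
  "simple_graph n E \<longleftrightarrow> finite E \<and> (\<forall>e\<in>E. e \<subseteq> {1..n} \<and> card e = 2)"

definition matching :: "nat set set \<Rightarrow> nat set set \<Rightarrow> bool" where
  "matching E M \<longleftrightarrow> M \<subseteq> E \<and> (\<forall>e1\<in>M. \<forall>e2\<in>M. e1 \<noteq> e2 \<longrightarrow> e1 \<inter> e2 = {})"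

definition verts :: "nat set set \<Rightarrow> nat set" where
  "verts M = \<Union>M"

definition consistent :: "nat set set \<Rightarrow> nat set set \<Rightarrow> bool" where
  "consistent M1 M2 \<longleftrightarrow> M1 \<inter> M2 = {} \<and> verts M1 = verts M2"

definition wt :: "(nat set \<Rightarrow> nat) \<Rightarrow> nat set set \<Rightarrow> nat" where
  "wt W F = (\<Sum>e\<in>F. W e)"

definition Mset :: "nat set set \<Rightarrow> (nat set \<Rightarrow> nat) \<Rightarrow> nat \<Rightarrow> nat \<Rightarrow>
    (nat set set \<times> nat set set) set" where
  "Mset E W w l = {(M1, M2). matching E M1 \<and> matching E M2 \<and> consistent M1 M2 \<and>
      card M1 = l div 2 \<and> card M2 = l div 2 \<and> wt W (M1 \<union> M2) = w}"

definition Uset :: "nat \<Rightarrow> nat set set \<Rightarrow> (nat set \<Rightarrow> nat) \<Rightarrow> nat \<Rightarrow> nat \<Rightarrow>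
    (nat set set \<times> nat set set \<times> nat set) set" where
  "Uset n E W w l = {(E1, E2, L). E1 \<subseteq> E \<and> card E1 = l div 2 \<and> E2 \<subseteq> E \<and> card E2 = l div 2 \<and>
      E1 \<inter> E2 = {} \<and> wt W (E1 \<union> E2) = w \<and> L \<subseteq> {1..n} \<and> card L = n - l}"

definition Aset :: "nat \<Rightarrow> nat set set \<Rightarrow> (nat set \<Rightarrow> nat) \<Rightarrow> nat \<Rightarrow> nat \<Rightarrow> nat \<Rightarrow>
    (nat set set \<times> nat set set \<times> nat set) set" where
  "Aset n E W w l i =
    (if i \<le> n then {(E1, E2, L) \<in> Uset n E W w l. i \<in> verts E1 \<union> L}
     else {(E1, E2, L) \<in> Uset n E W w l. i - n \<in> verts E2 \<union> L})"

end

theory Submission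
  imports Defs
begin

lemma card_verts_le:
  assumes "finite F" "\<forall>e\<in>F. finite e \<and> card e = 2"
  shows "card (verts F) \<le> 2 * card F"
proof -
  have "card (verts F) \<le> sum card F" unfolding verts_def by (rule card_Union_le_sum_card)
  also have "\<dots> = 2 * card F" using assms(2) by simp
  finally show ?thesis .
qed

lemma card_verts_matching:
  assumes "finite F" "\<forall>e\<in>F. finite e \<and> card e = 2"
    and "\<forall>e1\<in>F. \<forall>e2\<in>F. e1 \<noteq> e2 \<longrightarrow> e1 \<inter> e2 = {}"
  shows "card (verts F) = 2 * card F"
proof -
  have "card (verts F) = sum card F" unfolding verts_def
    using assms by (intro card_Union_disjoint) (auto simp: pairwise_def disjnt_def)
  also have "\<dots> = 2 * card F" using assms(2) by simp
  finally show ?thesis .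
qed

lemma card_verts_eq_matching:
  assumes "finite F" "\<forall>e\<in>F. finite e \<and> card e = 2"
    and "card (verts F) \<ge> 2 * card F"
  shows "\<forall>e1\<in>F. \<forall>e2\<in>F. e1 \<noteq> e2 \<longrightarrow> e1 \<inter> e2 = {}"
proof (rule ccontr)
  assume "\<not> ?thesis"
  then obtain e1 e2 where e: "e1 \<in> F" "e2 \<in> F" "e1 \<noteq> e2" "e1 \<inter> e2 \<noteq> {}" by blast
  let ?R = "F - {e1, e2}"
  have fin: "finite e1" "finite e2" "card e1 = 2" "card e2 = 2" using e assms(2) by auto
  have "verts F = (e1 \<union> e2) \<union> verts ?R" unfolding verts_def using e by blast
  hence "card (verts F) \<le> card (e1 \<union> e2) + card (verts ?R)" by (metis card_Un_le)
  moreover have "card (e1 \<union> e2) \<le> 3"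
  proof -
    have "card (e1 \<union> e2) + card (e1 \<inter> e2) = 4" using card_Un_Int[of e1 e2] fin by simp
    moreover have "card (e1 \<inter> e2) \<ge> 1" using e(4) fin
      by (metis One_nat_def Suc_leI card_gt_0_iff finite_Int)
    ultimately show ?thesis by linarith
  qed
  moreover have "card (verts ?R) \<le> 2 * card ?R"
    using assms by (intro card_verts_le) auto
  moreover have "card ?R = card F - 2" using e assms(1) by (simp add: card_Diff_subset)
  moreover have "card F \<ge> 2"
  proof -
    have "card {e1,e2} \<le> card F" using e assms(1) by (intro card_mono) auto
    thus ?thesis using e(3) by simp
  qed
  ultimately show False using assms(3) by linarith
qed

theorem lemma4:
  fixes n N w l :: nat and E :: "nat set set" and W :: "nat set \<Rightarrow> nat"
  assumes "simple_graph n E"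
    and "\<forall>e\<in>E. W e \<in> {1..N}"
    and "even l" and "l \<le> n"
  shows "card (Uset n E W w l \<inter> (\<Inter>i\<in>{1..2*n}. Aset n E W w l i)) = card (Mset E W w l)"
proof -
  have finE: "finite E" and edges: "\<forall>e\<in>E. e \<subseteq> {1..n} \<and> card e = 2"
    using assms(1) unfolding simple_graph_def by auto
  have edges2: "\<forall>e\<in>E. finite e \<and> card e = 2" using edges by (metis card.infinite zero_neq_numeral)
  have l2: "2 * (l div 2) = l" using assms(3) by simp
  have vsub: "verts F \<subseteq> {1..n}" if "F \<subseteq> E" for F
    using that edges unfolding verts_def by blast
  define f where "f = (\<lambda>(M1::nat set set, M2::nat set set). (M1, M2, {1..n} - verts M1))"
  have inj: "inj_on f (Mset E W w l)" unfolding f_def inj_on_def by auto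
  have key: "Uset n E W w l \<inter> (\<Inter>i\<in>{1..2*n}. Aset n E W w l i) = f ` Mset E W w l"
  proof (intro equalityI subsetI)
    fix x assume x: "x \<in> Uset n E W w l \<inter> (\<Inter>i\<in>{1..2*n}. Aset n E W w l i)"
    obtain E1 E2 L where xe: "x = (E1, E2, L)" by (cases x) auto
    have U: "E1 \<subseteq> E" "card E1 = l div 2" "E2 \<subseteq> E" "card E2 = l div 2"
      "E1 \<inter> E2 = {}" "wt W (E1 \<union> E2) = w" "L \<subseteq> {1..n}" "card L = n - l"
      using x xe unfolding Uset_def by auto
    have cov1: "{1..n} \<subseteq> verts E1 \<union> L"
    proof
      fix i assume i: "i \<in> {1..n}"
      hence "x \<in> Aset n E W w l i" using x by auto
      thus "i \<in> verts E1 \<union> L" using i xe unfolding Aset_def by auto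
    qed
    have cov2: "{1..n} \<subseteq> verts E2 \<union> L"
    proof
      fix i assume i: "i \<in> {1..n}"
      hence "i + n \<in> {1..2*n}" by auto
      hence "x \<in> Aset n E W w l (i + n)" using x by auto
      thus "i \<in> verts E2 \<union> L" using i xe unfolding Aset_def by auto
    qed
    have finL: "finite L" using U(7) finite_subset by blast
    have side: "card (verts F) = l \<and> verts F = {1..n} - L \<and> matching E F"
      if F: "F \<subseteq> E" "card F = l div 2" "{1..n} \<subseteq> verts F \<union> L" for F
    proof -
      have finF: "finite F" using F finE finite_subset by blast
      have e2F: "\<forall>e\<in>F. finite e \<and> card e = 2" using F edges2 by auto
      have le: "card (verts F) \<le> l" using card_verts_le[OF finF e2F] F l2 by simp
      have finV: "finite (verts F)" using vsub[OF F(1)] finite_subset by blast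
      have eq: "verts F \<union> L = {1..n}" using F vsub[OF F(1)] U(7) by blast
      have "card (verts F \<union> L) + card (verts F \<inter> L) = card (verts F) + card L"
        using card_Un_Int[OF finV finL] by simp
      hence c: "n + card (verts F \<inter> L) = card (verts F) + (n - l)" using eq U(8) by simp
      hence cl: "card (verts F) = l" and ci: "card (verts F \<inter> L) = 0"
        using le assms(4) by linarith+
      have "verts F \<inter> L = {}" using ci finV by simp
      hence "verts F = {1..n} - L" using eq by blast
      moreover have "matching E F" unfolding matching_def
        using F(1) card_verts_eq_matching[OF finF e2F] cl F(2) l2 by simp
      ultimately show ?thesis using cl by blast
    qed
    have s1: "card (verts E1) = l \<and> verts E1 = {1..n} - L \<and> matching E E1"
      using side U(1,2) cov1 by blast
    have s2: "card (verts E2) = l \<and> verts E2 = {1..n} - L \<and> matching E E2"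
      using side U(3,4) cov2 by blast
    have "(E1, E2) \<in> Mset E W w l"
      unfolding Mset_def consistent_def using s1 s2 U by auto
    moreover have "L = {1..n} - verts E1" using s1 U(7) by blast
    ultimately show "x \<in> f ` Mset E W w l" unfolding f_def xe by force
  next
    fix x assume "x \<in> f ` Mset E W w l"
    then obtain M1 M2 where m: "(M1, M2) \<in> Mset E W w l" and xe: "x = (M1, M2, {1..n} - verts M1)"
      unfolding f_def by auto
    have M: "matching E M1" "matching E M2" "M1 \<inter> M2 = {}" "verts M1 = verts M2"
      "card M1 = l div 2" "card M2 = l div 2" "wt W (M1 \<union> M2) = w"
      using m unfolding Mset_def consistent_def by auto
    have finM1: "finite M1" using M(1) finE unfolding matching_def using finite_subset by blast
    have cv: "card (verts M1) = l"
      using card_verts_matching[OF finM1] M(1) edges2 M(5) l2 unfolding matching_def by auto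
    have vs: "verts M1 \<subseteq> {1..n}" using vsub M(1) unfolding matching_def by blast
    have cL: "card ({1..n} - verts M1) = n - l"
      using vs cv by (subst card_Diff_subset) (auto intro: finite_subset)
    have U: "x \<in> Uset n E W w l" unfolding Uset_def xe using M cL unfolding matching_def by auto
    have "x \<in> Aset n E W w l i" if i: "i \<in> {1..2*n}" for i
    proof (cases "i \<le> n")
      case True thus ?thesis using U i unfolding Aset_def xe by auto
    next
      case False
      hence "i - n \<in> {1..n}" using i by auto
      thus ?thesis using U False M(4) unfolding Aset_def xe by auto
    qed
    thus "x \<in> Uset n E W w l \<inter> (\<Inter>i\<in>{1..2*n}. Aset n E W w l i)" using U by auto
  qed
  show ?thesis unfolding key using card_image[OF inj] .
qed

end
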